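(* If $k$ is even (and $k\ge2$), then $f(n,k)\ge\left(1-\frac{4}{k(k+2)}-o(1)\right)\binom{n}{3}$, where $o(1)\to0$ as $n\to\infty$ with $k$ fixed.
   Context: Let $K^{(2)}_n$ be the complete graph on $[n]$ with the natural order. A $k$-edge-labeling $\phi$ of $K^{(2)}_n$ assigns to each pair $uv$ a label from a fixed linearly ordered set of size $k$. A triple $u<v<w$ is good if $\phi(uv)<\phi(vw)$, and bad otherwise. $f(n,k)$ is the maximum, over all $k$-edge-labelings of $K^{(2)}_n$, of the number of good triples. *)

theory Defs
  imports Complex_Main
begin

text \<open>Vertices of K_n are 1..n with the natural order; labels are 0..<k (a linearly
ordered set of size k). A labeling phi assigns to the pair uv with u < v the label phi u v.\<close>

definition good_triples :: "nat \<Rightarrow> (nat \<Rightarrow> nat \<Rightarrow> nat) \<Rightarrow> (nat \<times> nat \<times> nat) set" where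
  "good_triples n \<phi> = {(u, v, w). 1 \<le> u \<and> u < v \<and> v < w \<and> w \<le> n \<and> \<phi> u v < \<phi> v w}"

definition num_good :: "nat \<Rightarrow> (nat \<Rightarrow> nat \<Rightarrow> nat) \<Rightarrow> nat" where
  "num_good n \<phi> = card (good_triples n \<phi>)"

definition is_labeling :: "nat \<Rightarrow> nat \<Rightarrow> (nat \<Rightarrow> nat \<Rightarrow> nat) \<Rightarrow> bool" where
  "is_labeling n k \<phi> \<longleftrightarrow> (\<forall>u v. 1 \<le> u \<longrightarrow> u < v \<longrightarrow> v \<le> n \<longrightarrow> \<phi> u v < k)"

definition f :: "nat \<Rightarrow> nat \<Rightarrow> nat" where
  "f n k = Max {num_good n \<phi> | \<phi>. is_labeling n k \<phi>}"

end

theory Submission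
  imports Defs "HOL-Real_Asymp.Real_Asymp"
begin


lemma c2_real: "real (n choose 2) = real n * (real n - 1) / 2"
proof (induction n)
  case (Suc n)
  have "(Suc n) choose 2 = n + (n choose 2)"
    by (simp add: numeral_2_eq_2)
  then show ?case using Suc by (simp add: field_simps)
qed simp

lemma c3_real: "real (n choose 3) = real n * (real n - 1) * (real n - 2) / 6"
proof (induction n)
  case (Suc n)
  have "(Suc n) choose 3 = (n choose 2) + (n choose 3)"
    by (simp add: numeral_3_eq_3 numeral_2_eq_2)
  then show ?case using Suc c2_real[of n] by (simp add: field_simps)
qed simp

lemma card_pairs: "card {(u,v). 1 \<le> u \<and> u < v \<and> v \<le> (n::nat)} = n choose 2"
proof (induction n)
  case 0
  have e: "{(u,v). 1 \<le> u \<and> u < v \<and> v \<le> (0::nat)} = {}" by auto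
  show ?case unfolding e by simp
next
  case (Suc n)
  have eq: "{(u,v). 1 \<le> u \<and> u < v \<and> v \<le> Suc n} =
     {(u,v). 1 \<le> u \<and> u < v \<and> v \<le> n} \<union> (\<lambda>u. (u, Suc n)) ` {1..n}"
    by auto
  have fin: "finite {(u,v). 1 \<le> u \<and> u < v \<and> v \<le> (n::nat)}"
    by (rule finite_subset[of _ "{1..n} \<times> {1..n}"]) auto
  have "card ({(u,v). 1 \<le> u \<and> u < v \<and> v \<le> n} \<union> (\<lambda>u. (u, Suc n)) ` {1..n})
      = card {(u,v). 1 \<le> u \<and> u < v \<and> v \<le> n} + card ((\<lambda>u. (u, Suc n)) ` {1..n})"
    by (rule card_Un_disjoint) (use fin in auto)
  also have "card ((\<lambda>u. (u, Suc n)) ` {1..n}) = n"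
    by (subst card_image) (auto simp: inj_on_def)
  finally show ?case using Suc eq by (simp add: numeral_2_eq_2)
qed

lemma card_T: "card {(u,v,w). 1 \<le> u \<and> u < v \<and> v < w \<and> w \<le> (n::nat)} = n choose 3"
proof (induction n)
  case 0
  have e: "{(u,v,w). 1 \<le> u \<and> u < v \<and> v < w \<and> w \<le> (0::nat)} = {}" by auto
  show ?case unfolding e by simp
next
  case (Suc n)
  let ?P = "{(u,v). 1 \<le> u \<and> u < v \<and> v \<le> n}"
  let ?T = "{(u,v,w). 1 \<le> u \<and> u < v \<and> v < w \<and> w \<le> (n::nat)}"
  have eq: "{(u,v,w). 1 \<le> u \<and> u < v \<and> v < w \<and> w \<le> Suc n} =
     ?T \<union> (\<lambda>(u,v). (u, v, Suc n)) ` ?P"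
    by (auto simp: image_iff le_Suc_eq)
  have fin: "finite ?T"
    by (rule finite_subset[of _ "{1..n} \<times> {1..n} \<times> {1..n}"]) auto
  have fin2: "finite ?P"
    by (rule finite_subset[of _ "{1..n} \<times> {1..n}"]) auto
  have "card (?T \<union> (\<lambda>(u,v). (u, v, Suc n)) ` ?P) = card ?T + card ((\<lambda>(u,v). (u, v, Suc n)) ` ?P)"
    by (rule card_Un_disjoint) (use fin fin2 in auto)
  also have "card ((\<lambda>(u,v). (u, v, Suc n)) ` ?P) = card ?P"
    by (subst card_image) (auto simp: inj_on_def)
  finally show ?case using Suc eq card_pairs[of n] by (simp add: numeral_3_eq_3 numeral_2_eq_2)
qed

lemma generic:
  fixes \<phi> :: "nat \<Rightarrow> nat \<Rightarrow> nat" and c :: "nat \<Rightarrow> nat"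
  assumes H: "\<And>u v w. 1 \<le> u \<Longrightarrow> u < v \<Longrightarrow> v < w \<Longrightarrow> w \<le> n \<Longrightarrow> \<phi> u v \<le> c v \<and> c v \<le> \<phi> v w"
  shows "n choose 3 \<le> num_good n \<phi> + (\<Sum>v\<in>{1..n}. card {u. 1 \<le> u \<and> u < v \<and> \<phi> u v = c v} * card {w. v < w \<and> w \<le> n \<and> \<phi> v w = c v})"
proof -
  define L where "L v = {u. 1 \<le> u \<and> u < v \<and> \<phi> u v = c v}" for v
  define R where "R v = {w. v < w \<and> w \<le> n \<and> \<phi> v w = c v}" for v
  let ?T = "{(u,v,w). 1 \<le> u \<and> u < v \<and> v < w \<and> w \<le> (n::nat)}"
  define B where "B = (\<Union>v\<in>{1..n}. (\<lambda>(u,w). (u,v,w)) ` (L v \<times> R v))"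
  have finL: "finite (L v)" for v unfolding L_def by (rule finite_subset[of _ "{..<v}"]) auto
  have finR: "finite (R v)" for v unfolding R_def by (rule finite_subset[of _ "{..n}"]) auto
  have finB: "finite B" unfolding B_def using finL finR by auto
  have fing: "finite (good_triples n \<phi>)"
    unfolding good_triples_def
    by (rule finite_subset[of _ "{1..n} \<times> {1..n} \<times> {1..n}"]) auto
  have sub: "?T \<subseteq> good_triples n \<phi> \<union> B"
  proof
    fix x assume "x \<in> ?T"
    then obtain u v w where x: "x = (u,v,w)" "1 \<le> u" "u < v" "v < w" "w \<le> n" by auto
    show "x \<in> good_triples n \<phi> \<union> B"
    proof (cases "\<phi> u v < \<phi> v w")
      case True
      then show ?thesis using x unfolding good_triples_def by auto
    next
      case False
      with H[OF x(2-5)] have "\<phi> u v = c v" "\<phi> v w = c v" by auto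
      then have "u \<in> L v" "w \<in> R v" using x unfolding L_def R_def by auto
      moreover have "v \<in> {1..n}" using x by auto
      ultimately have "(u,v,w) \<in> (\<lambda>(u,w). (u,v,w)) ` (L v \<times> R v)"
        by (intro image_eqI[where x="(u,w)"]) auto
      then have "x \<in> B" unfolding B_def using \<open>v \<in> {1..n}\<close> x(1) by (intro UN_I[of v]) auto
      then show ?thesis by (rule UnI2)
    qed
  qed
  have "n choose 3 = card ?T" using card_T by simp
  also have "\<dots> \<le> card (good_triples n \<phi> \<union> B)"
    by (rule card_mono) (use fing finB sub in auto)
  also have "\<dots> \<le> card (good_triples n \<phi>) + card B" by (rule card_Un_le)
  also have "card B \<le> (\<Sum>v\<in>{1..n}. card ((\<lambda>(u,w). (u,v,w)) ` (L v \<times> R v)))"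
    unfolding B_def by (rule card_UN_le) simp
  also have "\<dots> \<le> (\<Sum>v\<in>{1..n}. card (L v) * card (R v))"
  proof (rule sum_mono)
    fix v
    have "card ((\<lambda>(u,w). (u,v,w)) ` (L v \<times> R v)) \<le> card (L v \<times> R v)"
      by (rule card_image_le) (simp add: finL finR)
    then show "card ((\<lambda>(u,w). (u,v,w)) ` (L v \<times> R v)) \<le> card (L v) * card (R v)"
      by (simp add: card_cartesian_product)
  qed
  finally show ?thesis unfolding num_good_def L_def R_def by simp
qed




definition wt :: "nat \<Rightarrow> nat \<Rightarrow> nat" where
  "wt m j = (if j < 2*m then (if even j then m - j div 2 else Suc (j div 2)) else 0)"

definition st :: "nat \<Rightarrow> nat \<Rightarrow> nat \<Rightarrow> nat" where
  "st m N j = N * (\<Sum>i<j. wt m i)"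

definition cls :: "nat \<Rightarrow> nat \<Rightarrow> nat \<Rightarrow> nat" where
  "cls m N p = (LEAST j. p < st m N (Suc j))"

definition Phi :: "nat \<Rightarrow> nat \<Rightarrow> nat \<Rightarrow> nat \<Rightarrow> nat" where
  "Phi m N p q = (let j = cls m N p; j' = cls m N q; a = p - st m N j; b = q - st m N j' in
     if j' = j then j else if j' = Suc j then
       (if b * wt m j + a * wt m j' < N * wt m j * wt m j' then j else j') else Suc j)"

lemma wt_pos: "j < 2*m \<Longrightarrow> 0 < wt m j"
  unfolding wt_def by auto

lemma sum_wt_aux: "i \<le> m \<Longrightarrow> (\<Sum>j<2*i. wt m j) = i * (m+1)"
proof (induction i)
  case (Suc i)
  have "(\<Sum>j<2*Suc i. wt m j) = (\<Sum>j<2*i. wt m j) + wt m (2*i) + wt m (Suc (2*i))"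
    by simp
  also have "wt m (2*i) = m - i" using Suc.prems unfolding wt_def by auto
  also have "wt m (Suc (2*i)) = Suc i" using Suc.prems unfolding wt_def by auto
  finally show ?case using Suc by simp
qed simp

lemma sum_wt: "(\<Sum>j<2*m. wt m j) = m * (m+1)"
  using sum_wt_aux[of m m] by simp

lemma st_Suc: "st m N (Suc j) = st m N j + N * wt m j"
  unfolding st_def by (simp add: algebra_simps)

lemma st_mono: "i \<le> j \<Longrightarrow> st m N i \<le> st m N j"
  unfolding st_def by (intro mult_le_mono2 sum_mono2) auto

lemma st_2m: "st m N (2*m) = N * (m * (m+1))"
  unfolding st_def using sum_wt by simp

lemma cls_eq: assumes "st m N j \<le> p" "p < st m N (Suc j)" shows "cls m N p = j"
  unfolding cls_def
proof (rule Least_equality)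
  show "p < st m N (Suc j)" by fact
  fix y assume y: "p < st m N (Suc y)"
  show "j \<le> y"
  proof (rule ccontr)
    assume "\<not> j \<le> y"
    then have "st m N (Suc y) \<le> st m N j" by (intro st_mono) auto
    with y assms(1) show False by simp
  qed
qed

lemma block_ex:
  assumes m: "1 \<le> m" and p: "p < st m N (2*m)"
  shows "\<exists>j<2*m. st m N j \<le> p \<and> p < st m N (Suc j)"
proof -
  define j where "j = (LEAST j. p < st m N (Suc j))"
  have ex: "p < st m N (Suc (2*m - 1))" using p m by simp
  have j1: "p < st m N (Suc j)" unfolding j_def by (rule LeastI[of "\<lambda>j. p < st m N (Suc j)", OF ex])
  have j2: "j \<le> 2*m - 1" unfolding j_def by (rule Least_le[of "\<lambda>j. p < st m N (Suc j)", OF ex])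
  have j3: "st m N j \<le> p"
  proof (cases j)
    case 0 then show ?thesis by (simp add: st_def)
  next
    case (Suc i)
    have "\<not> p < st m N (Suc i)"
      using not_less_Least[of i "\<lambda>j. p < st m N (Suc j)"] Suc unfolding j_def by auto
    then show ?thesis using Suc by simp
  qed
  have "j < 2*m" using j2 m by simp
  then show ?thesis using j1 j3 by blast
qed

lemma cls_props:
  assumes m: "1 \<le> m" and p: "p < st m N (2*m)"
  shows "cls m N p < 2*m" "st m N (cls m N p) \<le> p" "p < st m N (Suc (cls m N p))"
proof -
  obtain j where j: "j < 2*m" "st m N j \<le> p" "p < st m N (Suc j)" using block_ex[OF m p] by blast
  have "cls m N p = j" by (rule cls_eq[OF j(2) j(3)])
  then show "cls m N p < 2*m" "st m N (cls m N p) \<le> p" "p < st m N (Suc (cls m N p))" using j by simp_all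
qed

lemma cls_mono:
  assumes m: "1 \<le> m" and pq: "p \<le> q" and q: "q < st m N (2*m)"
  shows "cls m N p \<le> cls m N q"
proof (rule ccontr)
  assume "\<not> ?thesis"
  then have "st m N (Suc (cls m N q)) \<le> st m N (cls m N p)" by (intro st_mono) auto
  moreover have pl: "p < st m N (2*m)" using pq q by simp
  moreover have "st m N (cls m N p) \<le> p" using cls_props(2)[OF m pl] .
  moreover have "q < st m N (Suc (cls m N q))" using cls_props(3)[OF m q] .
  ultimately show False using pq by linarith
qed

lemma Phi_le:
  assumes m: "1 \<le> m" and pq: "p < q" and q: "q < st m N (2*m)"
  shows "Phi m N p q \<le> cls m N q"
  using cls_mono[OF m _ q, of p] pq unfolding Phi_def Let_def by auto

lemma Phi_ge:
  shows "cls m N p \<le> Phi m N p q"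
  unfolding Phi_def Let_def by auto




lemma ell_bound:
  assumes m: "1 \<le> m" and q: "q < st m N (2*m)"
  defines "j \<equiv> cls m N q" and "b \<equiv> q - st m N (cls m N q)"
  shows "wt m j * card {p. p < q \<and> Phi m N p q = j} \<le> b * (wt m j + (if j = 0 then 0 else wt m (j - 1)))"
proof -
  note hq = cls_props[OF m q, folded j_def]
  have bq: "q = st m N j + b" using hq unfolding b_def j_def by simp
  have pprops: "cls m N p \<le> j" "st m N (cls m N p) \<le> p" "p < st m N (Suc (cls m N p))"
    if "p < q" for p
  proof -
    have pl: "p < st m N (2*m)" using that q by simp
    show "cls m N p \<le> j" unfolding j_def by (rule cls_mono[OF m _ q]) (use that in simp)
    show "st m N (cls m N p) \<le> p" "p < st m N (Suc (cls m N p))" using cls_props[OF m pl] by auto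
  qed
  let ?A = "{p. p < q \<and> Phi m N p q = j}"
  show ?thesis
  proof (cases j)
    case 0
    have "?A \<subseteq> {st m N j..<q}"
    proof
      fix p assume "p \<in> ?A"
      then have "p < q" by simp
      with pprops[OF this] 0 show "p \<in> {st m N j..<q}" by auto
    qed
    then have "card ?A \<le> b" using bq by (metis card_atLeastLessThan card_mono finite_atLeastLessThan diff_add_inverse)
    then show ?thesis using 0 by simp
  next
    case (Suc i)
    define E where "E = {a. a < N * wt m i \<and> \<not> (b * wt m i + a * wt m j < N * wt m i * wt m j)}"
    have sub: "?A \<subseteq> {st m N j..<q} \<union> (\<lambda>a. st m N i + a) ` E"
    proof
      fix p assume "p \<in> ?A"
      then have pq: "p < q" and ph: "Phi m N p q = j" by auto
      note pp = pprops[OF pq]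
      show "p \<in> {st m N j..<q} \<union> (\<lambda>a. st m N i + a) ` E"
      proof (cases "cls m N p = j")
        case True
        then have "p \<in> {st m N j..<q}" using pp pq by simp
        then show ?thesis by (rule UnI1)
      next
        case False
        show ?thesis
        proof (cases "cls m N p = i")
          case True
          have "Phi m N p q = (if b * wt m i + (p - st m N i) * wt m j < N * wt m i * wt m j then i else j)"
          proof -
            have cq: "cls m N q = Suc i" using Suc by (simp add: j_def)
            have bj: "q - st m N (Suc i) = b" using bq Suc by simp
            show ?thesis unfolding Phi_def Let_def using True Suc by (simp add: cq bj)
          qed
          note phi = this
          have nl: "\<not> (b * wt m i + (p - st m N i) * wt m j < N * wt m i * wt m j)"
          proof
            assume "b * wt m i + (p - st m N i) * wt m j < N * wt m i * wt m j"
            with phi have "Phi m N p q = i" by simp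
            with ph Suc show False by simp
          qed
          have "p - st m N i < N * wt m i" using pp True by (simp add: st_Suc)
          then have "p - st m N i \<in> E" using nl unfolding E_def by simp
          moreover have "p = st m N i + (p - st m N i)" using pp True by simp
          ultimately show ?thesis by blast
        next
          case False2: False
          then have "Suc (cls m N p) < j" using pp False Suc by simp
          then have "Phi m N p q = Suc (cls m N p)"
            unfolding Phi_def Let_def by (simp add: j_def[symmetric])
          then show ?thesis using ph \<open>Suc (cls m N p) < j\<close> by simp
        qed
      qed
    qed
    have wj: "0 < wt m j" using hq wt_pos by simp
    define D where "D = (b * wt m i) div wt m j"
    have Esub: "E \<subseteq> (\<lambda>d. N * wt m i - d) ` {1..D}"
    proof
      fix a assume "a \<in> E"
      then have a1: "a < N * wt m i" and a2: "N * wt m i * wt m j \<le> b * wt m i + a * wt m j"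
        unfolding E_def by auto
      have "(N * wt m i - a) * wt m j \<le> b * wt m i"
        using a2 by (simp add: diff_mult_distrib)
      then have "N * wt m i - a \<le> D" unfolding D_def using wj
        by (simp add: less_eq_div_iff_mult_less_eq)
      moreover have "a = N * wt m i - (N * wt m i - a)" using a1 by simp
      ultimately show "a \<in> (\<lambda>d. N * wt m i - d) ` {1..D}" using a1
        by (intro image_eqI[where x="N * wt m i - a"]) auto
    qed
    have fE: "finite E" by (rule finite_subset[OF Esub]) simp
    have "card E \<le> D"
      using card_mono[OF _ Esub] card_image_le[of "{1..D}" "\<lambda>d. N * wt m i - d"] by simp
    then have "wt m j * card E \<le> wt m j * D" by (rule mult_le_mono2)
    moreover have "wt m j * D \<le> b * wt m i" unfolding D_def by (rule times_div_less_eq_dividend)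
    ultimately have cE: "wt m j * card E \<le> b * wt m i" by linarith
    have "card ?A \<le> card ({st m N j..<q} \<union> (\<lambda>a. st m N i + a) ` E)"
      by (rule card_mono[OF _ sub]) (use fE in auto)
    also have "\<dots> \<le> card {st m N j..<q} + card ((\<lambda>a. st m N i + a) ` E)" by (rule card_Un_le)
    also have "\<dots> \<le> b + card E" using bq card_image_le[OF fE, of "\<lambda>a. st m N i + a"] by simp
    finally have cA: "card ?A \<le> b + card E" .
    have "wt m j * card ?A \<le> wt m j * (b + card E)" by (rule mult_le_mono2[OF cA])
    then have "wt m j * card ?A \<le> wt m j * b + wt m j * card E" by (simp add: distrib_left)
    then show ?thesis using cE Suc by (simp add: algebra_simps)
  qed
qed

lemma r_bound:
  assumes m: "1 \<le> m" and q: "q < st m N (2*m)"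
  defines "j \<equiv> cls m N q" and "b \<equiv> q - st m N (cls m N q)"
  shows "wt m j * card {r. q < r \<and> r < st m N (2*m) \<and> Phi m N q r = j} \<le> (N * wt m j - b) * (wt m j + wt m (Suc j))"
proof -
  note hq = cls_props[OF m q, folded j_def]
  have bq: "q = st m N j + b" using hq unfolding b_def j_def by simp
  define S where "S = N * wt m j"
  have stS: "st m N (Suc j) = st m N j + S" unfolding S_def by (simp add: st_Suc)
  have bS: "b < S" using hq bq stS by simp
  define X where "X = (S - b) * wt m (Suc j)"
  define E where "E = {c. c * wt m j < X}"
  let ?R = "{r. q < r \<and> r < st m N (2*m) \<and> Phi m N q r = j}"
  have sub: "?R \<subseteq> {Suc q..<st m N (Suc j)} \<union> (\<lambda>c. st m N (Suc j) + c) ` E"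
  proof
    fix r assume "r \<in> ?R"
    then have qr: "q < r" and rl: "r < st m N (2*m)" and ph: "Phi m N q r = j" by auto
    have jr: "j \<le> cls m N r" unfolding j_def by (rule cls_mono[OF m _ rl]) (use qr in simp)
    note rp = cls_props[OF m rl]
    show "r \<in> {Suc q..<st m N (Suc j)} \<union> (\<lambda>c. st m N (Suc j) + c) ` E"
    proof (cases "cls m N r = j")
      case True
      then have "r \<in> {Suc q..<st m N (Suc j)}" using rp qr by simp
      then show ?thesis by (rule UnI1)
    next
      case False
      show ?thesis
      proof (cases "cls m N r = Suc j")
        case True
        have "Phi m N q r = (if (r - st m N (Suc j)) * wt m j + b * wt m (Suc j) < N * wt m j * wt m (Suc j) then j else Suc j)"
        proof -
          have cq: "cls m N q = j" by (simp add: j_def)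
          have bj: "q - st m N j = b" using bq by simp
          show ?thesis unfolding Phi_def Let_def using True by (simp add: cq bj)
        qed
        then have lo: "(r - st m N (Suc j)) * wt m j + b * wt m (Suc j) < N * wt m j * wt m (Suc j)"
          using ph by (auto split: if_splits)
        have "N * wt m j * wt m (Suc j) = S * wt m (Suc j)" unfolding S_def by simp
        with lo have "(r - st m N (Suc j)) * wt m j + b * wt m (Suc j) < S * wt m (Suc j)" by simp
        then have "(r - st m N (Suc j)) * wt m j < S * wt m (Suc j) - b * wt m (Suc j)"
          by (simp add: less_diff_conv)
        then have "(r - st m N (Suc j)) * wt m j < X" unfolding X_def by (simp add: diff_mult_distrib)
        then have "r - st m N (Suc j) \<in> E" unfolding E_def by simp
        moreover have "r = st m N (Suc j) + (r - st m N (Suc j))" using rp True by simp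
        ultimately show ?thesis by blast
      next
        case False2: False
        then have "Suc j < cls m N r" using jr False by simp
        then have "Phi m N q r = Suc j"
          unfolding Phi_def Let_def by (simp add: j_def[symmetric])
        then show ?thesis using ph by simp
      qed
    qed
  qed
  have wj: "0 < wt m j" using hq wt_pos by simp
  have Esub: "E \<subseteq> {..X div wt m j}"
  proof
    fix c assume "c \<in> E"
    then have "c * wt m j \<le> X" unfolding E_def by simp
    then show "c \<in> {..X div wt m j}" using wj by (simp add: less_eq_div_iff_mult_less_eq)
  qed
  have "card E \<le> X div wt m j + 1" using card_mono[OF _ Esub] by simp
  then have "wt m j * card E \<le> wt m j * (X div wt m j + 1)" by (rule mult_le_mono2)
  then have "wt m j * card E \<le> wt m j * (X div wt m j) + wt m j" by (simp add: distrib_left)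
  moreover have "wt m j * (X div wt m j) \<le> X" by (rule times_div_less_eq_dividend)
  ultimately have cE: "wt m j * card E \<le> X + wt m j" by linarith
  have fE: "finite E" using Esub finite_subset by blast
  have "card ?R \<le> card ({Suc q..<st m N (Suc j)} \<union> (\<lambda>c. st m N (Suc j) + c) ` E)"
    by (rule card_mono[OF _ sub]) (use fE in auto)
  also have "\<dots> \<le> card {Suc q..<st m N (Suc j)} + card ((\<lambda>c. st m N (Suc j) + c) ` E)" by (rule card_Un_le)
  also have "\<dots> \<le> (S - b - 1) + card E" using bq stS card_image_le[OF fE] by simp
  finally have cR: "card ?R \<le> (S - b - 1) + card E" .
  have "wt m j * card ?R \<le> wt m j * ((S - b - 1) + card E)" by (rule mult_le_mono2[OF cR])
  also have "\<dots> = wt m j * (S - b - 1) + wt m j * card E" by (simp add: distrib_left)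
  also have "\<dots> \<le> wt m j * (S - b - 1) + X + wt m j" using cE by simp
  also have "\<dots> = wt m j * (S - b) + X"
  proof -
    have "S - b = Suc (S - b - 1)" using bS by simp
    then have "wt m j * (S - b) = wt m j * (S - b - 1) + wt m j" by (metis mult_Suc_right add.commute)
    then show ?thesis by simp
  qed
  also have "\<dots> = (S - b) * (wt m j + wt m (Suc j))" unfolding X_def by (simp add: algebra_simps)
  finally show ?thesis unfolding S_def .
qed




lemma sum_lt: "2 * (\<Sum>b<S. b) = S * (S - 1::nat)"
proof (induction S)
  case (Suc S) then show ?case by (cases S) (simp_all add: algebra_simps)
qed simp

lemma sum_bS: "6 * (\<Sum>b<S. b * (S - b)) + S = (S::nat)^3"
proof (induction S)
  case 0 then show ?case by simp
next
  case (Suc S)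
  have "(\<Sum>b<Suc S. b * (Suc S - b)) = (\<Sum>b<S. b * (Suc S - b)) + S" by simp
  also have "(\<Sum>b<S. b * (Suc S - b)) = (\<Sum>b<S. b * (S - b) + b)"
    by (rule sum.cong) (auto simp: Suc_diff_le)
  also have "\<dots> = (\<Sum>b<S. b * (S - b)) + (\<Sum>b<S. b)" by (simp add: sum.distrib)
  finally have e: "(\<Sum>b<Suc S. b * (Suc S - b)) = (\<Sum>b<S. b * (S - b)) + (\<Sum>b<S. b) + S" .
  have "6 * (\<Sum>b<Suc S. b * (Suc S - b)) + Suc S = (6 * (\<Sum>b<S. b * (S - b)) + S) + 3 * (2 * (\<Sum>b<S. b)) + 6 * S + 1"
    unfolding e by simp
  also have "\<dots> = S^3 + 3 * (S * (S - 1)) + 6 * S + 1" by (simp only: Suc.IH sum_lt)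
  also have "\<dots> = (Suc S)^3"
    by (cases S) (simp_all add: algebra_simps power3_eq_cube)
  finally show ?case .
qed

lemma sum_blocks:
  "(\<Sum>q < N * (\<Sum>i<K. wt m i). F q) = (\<Sum>j<K. \<Sum>b < N * wt m j. F (st m N j + b))"
proof (induction K)
  case 0 then show ?case by simp
next
  case (Suc K)
  define a where "a = N * (\<Sum>i<K. wt m i)"
  define d where "d = N * wt m K"
  have "N * (\<Sum>i<Suc K. wt m i) = a + d" unfolding a_def d_def by (simp add: algebra_simps)
  then have "(\<Sum>q < N * (\<Sum>i<Suc K. wt m i). F q) = (\<Sum>q < a + d. F q)" by simp
  also have "\<dots> = (\<Sum>q<a. F q) + (\<Sum>q\<in>{a..<a+d}. F q)"
    by (metis atLeast0LessThan le_add1 sum.atLeastLessThan_concat zero_le)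
  also have "(\<Sum>q\<in>{a..<a+d}. F q) = (\<Sum>b<d. F (a + b))"
    using sum.shift_bounds_nat_ivl[of F 0 a d] by (simp add: atLeast0LessThan add.commute)
  finally show ?case using Suc unfolding a_def d_def st_def by simp
qed

definition ell0 :: "nat \<Rightarrow> nat \<Rightarrow> nat \<Rightarrow> nat" where
  "ell0 m N q = card {p. p < q \<and> Phi m N p q = cls m N q}"
definition r0 :: "nat \<Rightarrow> nat \<Rightarrow> nat \<Rightarrow> nat" where
  "r0 m N q = card {r. q < r \<and> r < st m N (2*m) \<and> Phi m N q r = cls m N q}"

definition PP :: "nat \<Rightarrow> nat \<Rightarrow> nat" where
  "PP m j = wt m j + (if j = 0 then 0 else wt m (j - 1))"
definition QQ :: "nat \<Rightarrow> nat \<Rightarrow> nat" where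
  "QQ m j = wt m j + wt m (Suc j)"

lemma block_sum:
  assumes m: "1 \<le> m" and j: "j < 2*m"
  shows "6 * (\<Sum>b < N * wt m j. ell0 m N (st m N j + b) * r0 m N (st m N j + b))
         \<le> PP m j * QQ m j * wt m j * N^3"
proof -
  define S where "S = N * wt m j"
  define w where "w = wt m j"
  have wpos: "0 < w" unfolding w_def using wt_pos[OF j] .
  have each: "w^2 * (ell0 m N (st m N j + b) * r0 m N (st m N j + b)) \<le> (PP m j * QQ m j) * (b * (S - b))"
    if b: "b < S" for b
  proof -
    let ?q = "st m N j + b"
    have q1: "?q < st m N (Suc j)" using b unfolding S_def by (simp add: st_Suc)
    have "st m N (Suc j) \<le> st m N (2*m)" using j by (intro st_mono) simp
    with q1 have q: "?q < st m N (2*m)" by simp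
    have c: "cls m N ?q = j" by (rule cls_eq) (use q1 in simp_all)
    have bb: "?q - st m N (cls m N ?q) = b" using c by simp
    have l: "w * ell0 m N ?q \<le> b * PP m j"
      using ell_bound[OF m q] unfolding ell0_def PP_def w_def c by simp
    have r: "w * r0 m N ?q \<le> (S - b) * QQ m j"
      using r_bound[OF m q] unfolding r0_def QQ_def w_def S_def c by simp
    have "(w * ell0 m N ?q) * (w * r0 m N ?q) \<le> (b * PP m j) * ((S - b) * QQ m j)"
      by (rule mult_le_mono[OF l r])
    then show ?thesis by (simp add: power2_eq_square algebra_simps)
  qed
  have "w^2 * (\<Sum>b<S. ell0 m N (st m N j + b) * r0 m N (st m N j + b))
        \<le> (\<Sum>b<S. (PP m j * QQ m j) * (b * (S - b)))"
    unfolding sum_distrib_left by (rule sum_mono) (use each in simp)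
  also have "\<dots> = (PP m j * QQ m j) * (\<Sum>b<S. b * (S - b))" by (simp add: sum_distrib_left)
  finally have h1: "w^2 * (6 * (\<Sum>b<S. ell0 m N (st m N j + b) * r0 m N (st m N j + b)))
        \<le> (PP m j * QQ m j) * (6 * (\<Sum>b<S. b * (S - b)))"
    by (simp add: algebra_simps)
  have "6 * (\<Sum>b<S. b * (S - b)) \<le> S^3" using sum_bS[of S] by linarith
  then have "(PP m j * QQ m j) * (6 * (\<Sum>b<S. b * (S - b))) \<le> (PP m j * QQ m j) * S^3"
    by (rule mult_le_mono2)
  also have "\<dots> = w^2 * (PP m j * QQ m j * w * N^3)"
    unfolding S_def w_def by (simp add: power2_eq_square power3_eq_cube algebra_simps)
  finally have "w^2 * (6 * (\<Sum>b<S. ell0 m N (st m N j + b) * r0 m N (st m N j + b)))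
        \<le> w^2 * (PP m j * QQ m j * w * N^3)" using h1 by linarith
  then show ?thesis using wpos unfolding S_def w_def by simp
qed

lemma PQ_aux:
  assumes "i \<le> m"
  shows "(\<Sum>j<2*i. PP m j * QQ m j * wt m j) = i * (m * (m+1) * (m+1))"
  using assms
proof (induction i)
  case 0 then show ?case by simp
next
  case (Suc i)
  have im: "i < m" using Suc.prems by simp
  have w0: "wt m (2*i) = m - i" using im unfolding wt_def by simp
  have w1: "wt m (Suc (2*i)) = Suc i" using im unfolding wt_def by simp
  have wm: "(if 2*i = 0 then 0 else wt m (2*i - 1)) = i"
  proof (cases i)
    case 0 then show ?thesis by simp
  next
    case (Suc i')
    then have "2*i - 1 = Suc (2*i')" by simp
    then show ?thesis using Suc im unfolding wt_def by simp
  qed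
  have w2: "wt m (Suc (Suc (2*i))) = m - Suc i"
    unfolding wt_def by auto
  have t0: "PP m (2*i) * QQ m (2*i) * wt m (2*i) = m * (m+1) * (m - i)"
    unfolding PP_def QQ_def using w0 w1 wm im by (simp add: algebra_simps)
  have t1: "PP m (Suc (2*i)) * QQ m (Suc (2*i)) * wt m (Suc (2*i)) = (m+1) * m * Suc i"
    unfolding PP_def QQ_def using w0 w1 w2 im by (simp add: algebra_simps)
  have "(\<Sum>j<2*Suc i. PP m j * QQ m j * wt m j) = (\<Sum>j<2*i. PP m j * QQ m j * wt m j)
      + PP m (2*i) * QQ m (2*i) * wt m (2*i) + PP m (Suc (2*i)) * QQ m (Suc (2*i)) * wt m (Suc (2*i))"
    by simp
  also have "\<dots> = i * (m * (m+1) * (m+1)) + m * (m+1) * (m - i) + (m+1) * m * Suc i"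
    using Suc.IH Suc.prems t0 t1 by simp
  also have "\<dots> = Suc i * (m * (m+1) * (m+1))"
  proof -
    have "m * (m+1) * (m - i) + (m+1) * m * Suc i = m * (m+1) * ((m - i) + Suc i)" by (simp add: algebra_simps)
    also have "(m - i) + Suc i = m + 1" using im by simp
    finally show ?thesis by (simp add: algebra_simps)
  qed
  finally show ?case .
qed

lemma total_bound:
  assumes m: "1 \<le> m"
  shows "6 * (\<Sum>q < st m N (2*m). ell0 m N q * r0 m N q) \<le> N^3 * (m * (m+1))^2"
proof -
  have "6 * (\<Sum>q < st m N (2*m). ell0 m N q * r0 m N q)
      = (\<Sum>j<2*m. 6 * (\<Sum>b < N * wt m j. ell0 m N (st m N j + b) * r0 m N (st m N j + b)))"
    unfolding st_def sum_blocks by (simp add: sum_distrib_left st_def)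
  also have "\<dots> \<le> (\<Sum>j<2*m. PP m j * QQ m j * wt m j * N^3)"
    by (rule sum_mono) (use block_sum[OF m] in simp)
  also have "\<dots> = N^3 * (\<Sum>j<2*m. PP m j * QQ m j * wt m j)"
    by (simp add: sum_distrib_left algebra_simps)
  also have "\<dots> = N^3 * (m * (m+1))^2"
    using PQ_aux[of m m] by (simp add: power2_eq_square algebra_simps)
  finally show ?thesis .
qed




definition phi :: "nat \<Rightarrow> nat \<Rightarrow> nat \<Rightarrow> nat \<Rightarrow> nat" where
  "phi m N u v = (if v \<le> st m N (2*m) then Phi m N (u - 1) (v - 1) else 0)"

lemma Suc_image_eq: "{x. 0 < x \<and> P (x - 1)} = Suc ` {p. P p}"
proof (rule set_eqI, rule iffI)
  fix x assume "x \<in> {x. 0 < x \<and> P (x - 1)}"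
  then have "x = Suc (x - 1)" "P (x - 1)" by auto
  then show "x \<in> Suc ` {p. P p}" by blast
qed auto

lemma good_bound:
  assumes m: "1 \<le> m"
  shows "6 * (st m N (2*m) choose 3) \<le> 6 * num_good (st m N (2*m)) (phi m N) + N^3 * (m*(m+1))^2"
proof -
  define n where "n = st m N (2*m)"
  have H: "phi m N u v \<le> cls m N (v-1) \<and> cls m N (v-1) \<le> phi m N v w"
    if "1 \<le> u" "u < v" "v < w" "w \<le> n" for u v w
  proof
    have "phi m N u v = Phi m N (u - 1) (v - 1)" using that unfolding phi_def n_def by simp
    also have "\<dots> \<le> cls m N (v-1)" by (rule Phi_le[OF m]) (use that n_def in auto)
    finally show "phi m N u v \<le> cls m N (v-1)" .
    have "phi m N v w = Phi m N (v - 1) (w - 1)" using that unfolding phi_def n_def by simp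
    then show "cls m N (v-1) \<le> phi m N v w" using Phi_ge by simp
  qed
  note G = generic[of n "phi m N" "\<lambda>v. cls m N (v-1)", OF H]
  have setL: "{u. 1 \<le> u \<and> u < Suc q \<and> phi m N u (Suc q) = cls m N (Suc q - 1)}
      = Suc ` {p. p < q \<and> Phi m N p q = cls m N q}" if "q < n" for q
  proof -
    have "{u. 1 \<le> u \<and> u < Suc q \<and> phi m N u (Suc q) = cls m N (Suc q - 1)}
       = {x. 0 < x \<and> (x - 1 < q \<and> Phi m N (x-1) q = cls m N q)}"
      using that unfolding phi_def n_def by auto
    then show ?thesis using Suc_image_eq[of "\<lambda>p. p < q \<and> Phi m N p q = cls m N q"] by simp
  qed
  have setR: "{w. Suc q < w \<and> w \<le> n \<and> phi m N (Suc q) w = cls m N (Suc q - 1)}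
      = Suc ` {r. q < r \<and> r < n \<and> Phi m N q r = cls m N q}" if "q < n" for q
  proof -
    have "{w. Suc q < w \<and> w \<le> n \<and> phi m N (Suc q) w = cls m N (Suc q - 1)}
       = {x. 0 < x \<and> (q < x - 1 \<and> x - 1 < n \<and> Phi m N q (x-1) = cls m N q)}"
      using that unfolding phi_def n_def by auto
    then show ?thesis using Suc_image_eq[of "\<lambda>r. q < r \<and> r < n \<and> Phi m N q r = cls m N q"] by simp
  qed
  have s1: "{1..n} = Suc ` {..<n}"
  proof (rule set_eqI, rule iffI)
    fix x assume "x \<in> {1..n}"
    then have "x = Suc (x-1)" "x - 1 \<in> {..<n}" by auto
    then show "x \<in> Suc ` {..<n}" by blast
  qed auto
  have "(\<Sum>v\<in>{1..n}. card {u. 1 \<le> u \<and> u < v \<and> phi m N u v = cls m N (v-1)} *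
           card {w. v < w \<and> w \<le> n \<and> phi m N v w = cls m N (v-1)})
      = (\<Sum>q<n. card {u. 1 \<le> u \<and> u < Suc q \<and> phi m N u (Suc q) = cls m N (Suc q-1)} *
           card {w. Suc q < w \<and> w \<le> n \<and> phi m N (Suc q) w = cls m N (Suc q-1)})"
    unfolding s1 by (subst sum.reindex) auto
  also have "\<dots> = (\<Sum>q<n. ell0 m N q * r0 m N q)"
  proof (rule sum.cong)
    fix q assume "q \<in> {..<n}"
    then have q: "q < n" by simp
    show "card {u. 1 \<le> u \<and> u < Suc q \<and> phi m N u (Suc q) = cls m N (Suc q-1)} *
           card {w. Suc q < w \<and> w \<le> n \<and> phi m N (Suc q) w = cls m N (Suc q-1)} = ell0 m N q * r0 m N q"
      unfolding setL[OF q] setR[OF q] ell0_def r0_def n_def[symmetric] by (simp add: card_image)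
  qed simp
  finally have "n choose 3 \<le> num_good n (phi m N) + (\<Sum>q<n. ell0 m N q * r0 m N q)"
    using G by simp
  then have "6 * (n choose 3) \<le> 6 * num_good n (phi m N) + 6 * (\<Sum>q<n. ell0 m N q * r0 m N q)"
    by simp
  also have "6 * (\<Sum>q<n. ell0 m N q * r0 m N q) \<le> N^3 * (m*(m+1))^2"
    unfolding n_def by (rule total_bound[OF m])
  finally show ?thesis unfolding n_def by simp
qed

lemma num_good_le: "num_good n \<phi> \<le> n^3"
proof -
  have "good_triples n \<phi> \<subseteq> {1..n} \<times> {1..n} \<times> {1..n}" unfolding good_triples_def by auto
  then have "card (good_triples n \<phi>) \<le> card ({1..n} \<times> {1..n} \<times> {1..n})"
    by (intro card_mono) auto
  then show ?thesis unfolding num_good_def by (simp add: card_cartesian_product power3_eq_cube)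
qed

lemma f_ge: "is_labeling n k \<phi> \<Longrightarrow> num_good n \<phi> \<le> f n k"
  unfolding f_def
  by (rule Max_ge) (auto intro: finite_subset[of _ "{..n^3}"] simp: num_good_le)

lemma num_good_mono: "n0 \<le> n \<Longrightarrow> num_good n0 \<phi> \<le> num_good n \<phi>"
  unfolding num_good_def
  by (rule card_mono) (auto simp: good_triples_def intro: finite_subset[of _ "{1..n} \<times> {1..n} \<times> {1..n}"])

lemma phi_labeling:
  assumes m: "1 \<le> m"
  shows "is_labeling n (2*m) (phi m N)"
  unfolding is_labeling_def
proof (intro allI impI)
  fix u v assume uv: "1 \<le> u" "u < v" "v \<le> n"
  show "phi m N u v < 2*m"
  proof (cases "v \<le> st m N (2*m)")
    case True
    then have "phi m N u v = Phi m N (u - 1) (v - 1)" unfolding phi_def by simp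
    also have "\<dots> \<le> cls m N (v - 1)" by (rule Phi_le[OF m]) (use uv True in auto)
    also have "\<dots> < 2*m" using cls_props(1)[OF m, of "v - 1" N] uv True by auto
    finally show ?thesis .
  next
    case False then show ?thesis unfolding phi_def using m by simp
  qed
qed

lemma real_ineq:
  fixes x y M :: real
  assumes M: "1 \<le> M" and x0: "0 \<le> x" and xy: "x \<le> y" and yx: "y - x \<le> M" and y3: "3 \<le> y"
  shows "(1 - 1/M) * (y*(y-1)*(y-2)) - 6*M*y^2 \<le> x*(x-1)*(x-2) - x^3/M"
proof -
  define a where "a = 1 - 1/M"
  have a0: "0 \<le> a" "a \<le> 1" unfolding a_def using M by (auto simp: field_simps)
  have e1: "x*(x-1)*(x-2) - x^3/M = a * x^3 - 3*x^2 + 2*x"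
    unfolding a_def using M by (simp add: field_simps power2_eq_square power3_eq_cube)
  have e2: "y*(y-1)*(y-2) \<le> y^3"
    using y3 by (simp add: power3_eq_cube algebra_simps)
  have e3: "y^3 - x^3 = (y - x) * (y^2 + x*y + x^2)"
    by (simp add: power2_eq_square power3_eq_cube algebra_simps)
  have e4: "y^2 + x*y + x^2 \<le> 3 * y^2"
    using x0 xy by (simp add: power2_eq_square) (smt (verit) mult_mono mult_nonneg_nonneg)
  have e5: "(y - x) * (y^2 + x*y + x^2) \<le> M * (3 * y^2)"
    by (rule mult_mono) (use yx e4 xy x0 in auto)
  have e6: "a * (y^3 - x^3) \<le> y^3 - x^3"
    using a0 e3 e5 xy x0 by (smt (verit) mult_left_le_one_le mult_nonneg_nonneg zero_le_power2 power_mono)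
  have "(1 - 1/M) * (y*(y-1)*(y-2)) \<le> a * y^3" unfolding a_def[symmetric]
    using e2 a0 by (simp add: mult_left_mono)
  moreover have "x^2 \<le> y^2" using x0 xy by (simp add: power_mono)
  moreover have "1 * y^2 \<le> M * y^2" by (rule mult_right_mono) (use M in auto)
  moreover have "0 \<le> 2 * x" using x0 by simp
  ultimately show ?thesis unfolding e1 using e3 e5 e6 by (simp add: algebra_simps)
qed




theorem lemma4p5:
  fixes k :: nat
  assumes "even k" and "k \<ge> 2"
  shows "\<exists>g :: nat \<Rightarrow> real. g \<longlonglongrightarrow> 0 \<and>
           (\<forall>n. real (f n k) \<ge> (1 - 4 / (real k * (real k + 2)) - g n) * real (n choose 3))"
proof -
  obtain m where k: "k = 2*m" using assms(1) by (auto elim: evenE)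
  have m: "1 \<le> m" using assms(2) k by simp
  define M where "M = m*(m+1)"
  have M1: "1 \<le> M" using m unfolding M_def by simp
  define g where "g = (\<lambda>n::nat. 6 * real M * real n ^ 2 / (real n * (real n - 1) * (real n - 2)))"
  have lim: "g \<longlonglongrightarrow> 0" unfolding g_def by real_asymp
  have ck: "4 / (real k * (real k + 2)) = 1 / real M"
  proof -
    have "real k * (real k + 2) = 4 * real M" unfolding k M_def by (simp add: algebra_simps)
    then show ?thesis by simp
  qed
  have main: "real (f n k) \<ge> (1 - 4 / (real k * (real k + 2)) - g n) * real (n choose 3)" for n
  proof -
    define N where "N = n div M"
    define n0 where "n0 = st m N (2*m)"
    have n0M: "n0 = N * M" unfolding n0_def st_2m M_def ..
    have n0n: "n0 \<le> n" unfolding n0M N_def by simp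
    have nM: "n < n0 + M"
    proof -
      have "n = n div M * M + n mod M" by simp
      moreover have "n mod M < M" using M1 by simp
      ultimately show ?thesis unfolding n0M N_def by linarith
    qed
    have lab: "is_labeling n k (phi m N)" using phi_labeling[OF m] k by simp
    have fg: "num_good n0 (phi m N) \<le> f n k"
      using num_good_mono[OF n0n] f_ge[OF lab] le_trans by blast
    have gb: "6 * (n0 choose 3) \<le> 6 * num_good n0 (phi m N) + N^3 * M^2"
      using good_bound[OF m, of N] unfolding n0_def M_def .
    then have gbr: "6 * real (n0 choose 3) \<le> 6 * real (num_good n0 (phi m N)) + real N^3 * real M^2"
      by (metis (mono_tags, lifting) of_nat_add of_nat_le_iff of_nat_mult of_nat_numeral of_nat_power)
    define x where "x = real n0"
    define y where "y = real n"
    have Mpos: "0 < real M" using M1 by simp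
    have xN: "real N^3 * real M^2 = x^3 / real M"
      unfolding x_def n0M using Mpos by (simp add: field_simps power3_eq_cube power2_eq_square)
    have gx: "x*(x-1)*(x-2) - x^3 / real M \<le> 6 * real (f n k)"
    proof -
      have "x*(x-1)*(x-2) = 6 * real (n0 choose 3)" unfolding x_def c3_real by simp
      then have "x*(x-1)*(x-2) - x^3 / real M \<le> 6 * real (num_good n0 (phi m N))"
        using gbr xN by linarith
      also have "\<dots> \<le> 6 * real (f n k)" using fg by simp
      finally show ?thesis .
    qed
    show ?thesis
    proof (cases "n < 3")
      case True
      have z: "n choose 3 = 0" using True by (simp add: binomial_eq_0)
      show ?thesis by (simp add: z)
    next
      case False
      then have y3: "3 \<le> y" unfolding y_def by simp
      have C: "real (n choose 3) = y*(y-1)*(y-2)/6" unfolding y_def c3_real ..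
      have nz: "y*(y-1)*(y-2) \<noteq> 0" using y3 by simp
      have gC: "g n * real (n choose 3) = real M * y^2"
        unfolding C g_def y_def[symmetric] using nz by (simp add: field_simps)
      have "(1 - 4 / (real k * (real k + 2)) - g n) * real (n choose 3)
          = ((1 - 1 / real M) * (y*(y-1)*(y-2)) - 6 * real M * y^2) / 6"
      proof -
        have "(1 - 4 / (real k * (real k + 2)) - g n) * real (n choose 3)
            = (1 - 1 / real M) * real (n choose 3) - g n * real (n choose 3)"
          unfolding ck by (simp add: algebra_simps)
        also have "\<dots> = (1 - 1 / real M) * (y*(y-1)*(y-2)/6) - real M * y^2" by (subst gC, subst C, rule refl)
        also have "\<dots> = ((1 - 1 / real M) * (y*(y-1)*(y-2)) - 6 * real M * y^2) / 6"
          by (simp add: diff_divide_distrib)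
        finally show ?thesis .
      qed
      also have "\<dots> \<le> (x*(x-1)*(x-2) - x^3 / real M) / 6"
      proof -
        have ri: "(1 - 1 / real M) * (y*(y-1)*(y-2)) - 6 * real M * y^2 \<le> x*(x-1)*(x-2) - x^3 / real M"
          using real_ineq[of "real M" x y] M1 n0n nM y3 unfolding x_def y_def by simp
        show ?thesis by (rule divide_right_mono[OF ri]) simp
      qed
      also have "\<dots> \<le> real (f n k)" using gx by simp
      finally show ?thesis .
    qed
  qed
  show ?thesis using lim main by blast
qed


end
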